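(* Let $j_0\ge1$ be an integer, $M>0$ and $L>2$. Let $(a_j)_{j\ge1}$, $(b_j)_{j\ge0}$, $(d_j)_{j\ge0}$ be sequences of nonnegative real numbers such that $a_{j_0}\le M$, $b_{j_0}\le M$, $d_{j_0}\le M$, and for all $j\ge j_0+1$: $$b_j\le b_{j-1},\qquad a_j+b_j\le L\,a_{j-1},\qquad d_j\le M2^{-j},$$ and $$\text{if } a_j\ge\tfrac12 a_{j-1}\ \text{and}\ a_j\ge\max\{2^{-j},d_{j-1}\},\ \text{then } b_j\le L(b_{j-1}-b_j).$$ Then there exist $\theta=\theta(L)\in(1/2,1)$ depending only on $L$ and $C_0=C_0(L,j_0)$ depending only on $L$ and $j_0$ such that $$b_{j+1}\le C_0(M+1)\big(\theta^j+j\theta^j\big)\qquad\text{for all } j\ge j_0+1.$$ *)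

theory Defs
  imports Complex_Main
begin

end

theory Submission
  imports Defs
begin

lemma main_bound:
  fixes L \<eta> \<theta> M :: real and p j0 :: nat and a b d :: "nat \<Rightarrow> real"
  assumes L: "L > 2" and pe: "(L/(L+1))^p * L \<le> \<eta>" and eta: "1/2 \<le> \<eta>"
    and thp: "\<theta>^(Suc p) = \<eta>" and th0: "0 < \<theta>"
    and j0: "j0 \<ge> 1" and M: "M > 0"
    and a0: "\<forall>j\<ge>1. a j \<ge> 0" and b0: "\<forall>j. b j \<ge> 0" and d0: "\<forall>j. d j \<ge> 0"
    and aj0: "a j0 \<le> M" and bj0: "b j0 \<le> M" and dj0: "d j0 \<le> M"
    and H: "\<forall>j\<ge>j0+1.
           b j \<le> b (j-1) \<and>
           a j + b j \<le> L * a (j-1) \<and>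
           d j \<le> M * (1/2)^j \<and>
           ((a j \<ge> a (j-1) / 2 \<and> a j \<ge> max ((1/2)^j) (d (j-1)))
              \<longrightarrow> b j \<le> L * (b (j-1) - b j))"
  shows "\<forall>j\<ge>j0+1. b (j+1) \<le> (L*2^(j0+1)/\<theta>^j0) * (M+1) * (\<theta>^j + real j * \<theta>^j)"
proof -
  define X where "X = (M+1)^Suc p * 2^(j0+1)"
  define P where "P i = b i ^ p * a i" for i
  have Hb: "b j \<le> b (j-1)" and Ha: "a j + b j \<le> L * a (j-1)" and Hd: "d j \<le> M * (1/2)^j"
    and Hc: "(a j \<ge> a (j-1) / 2 \<and> a j \<ge> max ((1/2)^j) (d (j-1))) \<Longrightarrow> b j \<le> L * (b (j-1) - b j)"
    if "j \<ge> j0+1" for j using H that by auto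
  have bM: "b (j0+n) \<le> M" for n
  proof (induction n)
    case 0 then show ?case using bj0 by simp
  next
    case (Suc n)
    have "b (j0 + Suc n) \<le> b (j0 + Suc n - 1)" by (rule Hb) simp
    then show ?case using Suc by simp
  qed
  have P0: "P i \<ge> 0" if "i \<ge> 1" for i using a0 b0 that unfolding P_def by simp
  have inv: "P (j0+n) \<le> X * \<eta>^n" for n
  proof (induction n)
    case 0
    have "b j0 ^ p \<le> (M+1)^p" using b0 bj0 by (intro power_mono) auto
    moreover have "a j0 \<le> M + 1" using aj0 by simp
    ultimately have "P j0 \<le> (M+1)^p * (M+1)"
      unfolding P_def using a0 j0 M by (intro mult_mono) auto
    also have "\<dots> \<le> (M+1)^p * (M+1) * 2^(j0+1)"
    proof -
      have h: "(1::real) \<le> 2^(j0+1)" by (rule one_le_power) simp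
      have "0 \<le> (M+1)^p * (M+1)" using M by simp
      then show ?thesis using mult_left_mono[OF h] by simp
    qed
    finally show ?case by (simp add: X_def mult.commute)
  next
    case (Suc n)
    define j where "j = j0 + Suc n"
    have jj: "j \<ge> j0+1" "j - 1 = j0 + n" "j \<ge> 1" "j - 1 \<ge> 1" using j0 by (auto simp: j_def)
    have bj: "b j \<ge> 0" "b (j-1) \<ge> 0" using b0 by auto
    have aj: "a j \<ge> 0" "a (j-1) \<ge> 0" using a0 jj by auto
    have Pm: "P (j-1) \<ge> 0" using P0 jj by simp
    have IH: "P (j-1) \<le> X * \<eta>^n" using Suc jj by simp
    have step: "P j \<le> \<eta> * P (j-1)" if nB: "a j \<ge> max ((1/2)^j) (d (j-1))"
    proof (cases "a j < a (j-1) / 2")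
      case True
      have "b j ^ p \<le> b (j-1)^p" using bj Hb[OF jj(1)] by (intro power_mono) auto
      then have "P j \<le> b (j-1)^p * (a (j-1)/2)" unfolding P_def
        using True aj bj by (intro mult_mono) auto
      also have "\<dots> = P (j-1) / 2" unfolding P_def by simp
      also have "\<dots> \<le> \<eta> * P (j-1)" using mult_right_mono[OF eta Pm] by simp
      finally show ?thesis .
    next
      case False
      then have c: "b j \<le> L * (b (j-1) - b j)" using Hc[OF jj(1)] nB by simp
      have "b j * (L+1) \<le> L * b (j-1)" using c by (simp add: algebra_simps)
      then have bb: "b j \<le> (L/(L+1)) * b (j-1)" using L by (simp add: field_simps)
      have "b j ^ p \<le> ((L/(L+1)) * b (j-1))^p" using bj bb by (intro power_mono) auto
      also have "\<dots> = (L/(L+1))^p * b (j-1)^p" by (rule power_mult_distrib)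
      finally have bp: "b j ^ p \<le> (L/(L+1))^p * b (j-1)^p" .
      have aa: "a j \<le> L * a (j-1)" using Ha[OF jj(1)] bj by simp
      have "P j \<le> ((L/(L+1))^p * b (j-1)^p) * (L * a (j-1))" unfolding P_def
        using bp aa aj bj L by (intro mult_mono) auto
      also have "\<dots> = ((L/(L+1))^p * L) * P (j-1)" unfolding P_def by simp
      also have "\<dots> \<le> \<eta> * P (j-1)" using pe Pm by (intro mult_right_mono) auto
      finally show ?thesis .
    qed
    show ?case
    proof (cases "a j \<ge> max ((1/2)^j) (d (j-1))")
      case True
      have "P j \<le> \<eta> * P (j-1)" by (rule step[OF True])
      also have "\<dots> \<le> \<eta> * (X * \<eta>^n)" using IH eta by (intro mult_left_mono) auto
      finally show ?thesis by (simp add: j_def mult_ac)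
    next
      case False
      have two: "(2::real)^(j0+1) * (1/2)^(j0+1) = 1"
        by (simp add: power_mult_distrib[symmetric])
      have ab: "a j \<le> (M+1) * 2^(j0+1) * (1/2)^j"
      proof (cases "d (j-1) \<le> (1/2)^j")
        case True
        then have "a j \<le> (1/2)^j" using False by simp
        also have "\<dots> \<le> (M+1) * 2^(j0+1) * (1/2)^j"
        proof -
          have h1: "(1::real) \<le> 2^(j0+1)" by (rule one_le_power) simp
          have "1*1 \<le> (M+1) * 2^(j0+1)" using M h1 by (intro mult_mono) auto
          then have "1 \<le> (M+1) * 2^(j0+1)" by simp
          then show ?thesis by (simp add: mult_right_mono [where c="(1/2)^j", simplified])
        qed
        finally show ?thesis .
      next
        case dT: False
        then have ad: "a j \<le> d (j-1)" using False by simp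
        show ?thesis
        proof (cases n)
          case 0
          then have "j = j0 + 1" "j - 1 = j0" by (auto simp: j_def)
          then have eq: "(M+1) * 2^(j0+1) * (1/2)^j = M + 1" using two by simp
          have "a j \<le> M + 1" using ad dj0 \<open>j-1 = j0\<close> by simp
          then show ?thesis unfolding eq .
        next
          case (Suc m)
          then have jm: "j - 1 \<ge> j0+1" using jj by simp
          have "d (j-1) \<le> M * (1/2)^(j-1)" by (rule Hd[OF jm])
          also have "\<dots> = 2 * M * (1/2)^j"
          proof -
            obtain k where k: "j = Suc k" using jj by (cases j) auto
            show ?thesis unfolding k by simp
          qed
          also have "\<dots> \<le> (M+1) * 2^(j0+1) * (1/2)^j"
          proof -
            have "(1::real) \<le> 2^j0" by (rule one_le_power) simp
            then have "(2::real) \<le> 2^(j0+1)" by simp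
            then have "M * 2 \<le> (M+1) * 2^(j0+1)" using M by (intro mult_mono) auto
            then have "2 * M \<le> (M+1) * 2^(j0+1)" by (simp add: mult.commute)
            then show ?thesis by (intro mult_right_mono) auto
          qed
          finally show ?thesis using ad by simp
        qed
      qed
      have "b j ^ p \<le> (M+1)^p" using bj bM[of "Suc n"] M by (intro power_mono) (auto simp: j_def)
      then have "P j \<le> (M+1)^p * ((M+1) * 2^(j0+1) * (1/2)^j)" unfolding P_def
        using ab aj M by (intro mult_mono) auto
      also have "\<dots> = X * (1/2)^j" unfolding X_def by simp
      also have "\<dots> \<le> X * \<eta>^Suc n"
      proof -
        have "(1/2::real)^j \<le> (1/2)^Suc n" by (intro power_decreasing) (auto simp: j_def)
        also have "\<dots> \<le> \<eta>^Suc n" using eta by (intro power_mono) auto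
        finally show ?thesis unfolding X_def using M by (intro mult_left_mono) auto
      qed
      finally show ?thesis by (simp add: j_def)
    qed
  qed
  show ?thesis
  proof (intro allI impI)
    fix j assume j: "j \<ge> j0+1"
    then obtain n where n: "j = j0 + n" by (metis le_add1 le_add_diff_inverse le_trans)
    have j1: "j+1 \<ge> j0+1" using j by simp
    have bj: "b (j+1) \<le> b j" using Hb[OF j1] by simp
    have ba: "b (j+1) \<le> L * a j" using Ha[OF j1] a0[rule_format, of "j+1"] by simp
    have b1: "b (j+1) \<ge> 0" "b j \<ge> 0" using b0 by auto
    have "b (j+1) ^ Suc p = b (j+1)^p * b (j+1)" by simp
    also have "\<dots> \<le> b j ^ p * (L * a j)" using bj ba b1 by (intro mult_mono power_mono) auto
    also have "\<dots> = L * P j" unfolding P_def by simp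
    also have "\<dots> \<le> L * (X * \<eta>^n)" using inv[of n] n L by (intro mult_left_mono) auto
    finally have bp: "b (j+1) ^ Suc p \<le> L * (X * \<eta>^n)" .
    define Y where "Y = L * 2^(j0+1) * (M+1) * \<theta>^n"
    have Y0: "Y \<ge> 0" using L M th0 by (simp add: Y_def)
    have "Y ^ Suc p = (L * 2^(j0+1))^Suc p * (M+1)^Suc p * (\<theta>^Suc p)^n"
      unfolding Y_def by (simp add: power_mult_distrib power_mult[symmetric] mult.commute)
    also have "\<dots> = (L * 2^(j0+1))^Suc p * (M+1)^Suc p * \<eta>^n" using thp by simp
    finally have Yp: "Y ^ Suc p = (L * 2^(j0+1))^Suc p * (M+1)^Suc p * \<eta>^n" .
    have "L * 2^(j0+1) \<le> (L * 2^(j0+1))^Suc p"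
    proof -
      have h1: "(1::real) \<le> 2^(j0+1)" by (rule one_le_power) simp
      have "1*1 \<le> L * 2^(j0+1)" using L h1 by (intro mult_mono) auto
      then have "1 \<le> L * 2^(j0+1)" by simp
      then show ?thesis by (metis power_increasing power_one_right Suc_le_mono le0 One_nat_def)
    qed
    then have "(L * 2^(j0+1)) * ((M+1)^Suc p * \<eta>^n) \<le> (L * 2^(j0+1))^Suc p * ((M+1)^Suc p * \<eta>^n)"
      using M eta by (intro mult_right_mono) auto
    then have "L * (X * \<eta>^n) \<le> Y ^ Suc p" unfolding Yp X_def by (simp add: mult_ac)
    with bp have "b (j+1) ^ Suc p \<le> Y ^ Suc p" by simp
    then have "b (j+1) \<le> Y" using Y0 by (rule power_le_imp_le_base)
    also have "Y = (L*2^(j0+1)/\<theta>^j0) * (M+1) * \<theta>^j"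
      unfolding Y_def n using th0 by (simp add: power_add)
    also have "\<dots> \<le> (L*2^(j0+1)/\<theta>^j0) * (M+1) * (\<theta>^j + real j * \<theta>^j)"
      using L M th0 by (intro mult_left_mono) auto
    finally show "b (j+1) \<le> (L*2^(j0+1)/\<theta>^j0) * (M+1) * (\<theta>^j + real j * \<theta>^j)" .
  qed
qed

theorem lemma3p2:
  fixes L :: real
  assumes "L > 2"
  shows "\<exists>\<theta>::real. 1/2 < \<theta> \<and> \<theta> < 1 \<and>
    (\<forall>j0::nat. j0 \<ge> 1 \<longrightarrow> (\<exists>C0::real.
      \<forall>(M::real) (a::nat \<Rightarrow> real) (b::nat \<Rightarrow> real) (d::nat \<Rightarrow> real).
        M > 0 \<and>
        (\<forall>j\<ge>1. a j \<ge> 0) \<and> (\<forall>j. b j \<ge> 0) \<and> (\<forall>j. d j \<ge> 0) \<and>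
        a j0 \<le> M \<and> b j0 \<le> M \<and> d j0 \<le> M \<and>
        (\<forall>j\<ge>j0+1.
           b j \<le> b (j-1) \<and>
           a j + b j \<le> L * a (j-1) \<and>
           d j \<le> M * (1/2)^j \<and>
           ((a j \<ge> a (j-1) / 2 \<and> a j \<ge> max ((1/2)^j) (d (j-1)))
              \<longrightarrow> b j \<le> L * (b (j-1) - b j)))
        \<longrightarrow> (\<forall>j\<ge>j0+1. b (j+1) \<le> C0 * (M+1) * (\<theta>^j + real j * \<theta>^j))))"
proof -
  have "L/(L+1) < 1" "0 < 1/L" using assms by auto
  then obtain p where p: "(L/(L+1))^p < 1/L" using real_arch_pow_inv by blast
  define \<eta> where "\<eta> = max (3/4) ((L/(L+1))^p * L)"
  have pe: "(L/(L+1))^p * L < 1" using p assms by (simp add: field_simps)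
  have eta: "3/4 \<le> \<eta>" "\<eta> < 1" "(L/(L+1))^p * L \<le> \<eta>" using pe by (auto simp: \<eta>_def)
  define \<theta> where "\<theta> = root (Suc p) \<eta>"
  have thp: "\<theta>^Suc p = \<eta>" unfolding \<theta>_def using eta by (intro real_root_pow_pos2) auto
  have th1: "\<theta> < 1" unfolding \<theta>_def using eta by (simp add: real_root_lt_1_iff)
  have th0: "0 < \<theta>" unfolding \<theta>_def using eta by simp
  have "\<theta>^Suc p \<le> \<theta>" using th0 th1 by (metis less_eq_real_def power_one_right power_decreasing Suc_le_mono le0 One_nat_def)
  then have thge: "3/4 \<le> \<theta>" using thp eta by simp
  show ?thesis
    apply (rule exI[of _ \<theta>])
    apply (intro conjI allI impI)
    subgoal using thge by simp
    subgoal by (rule th1)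
    subgoal for j0
      apply (rule exI[of _ "L*2^(j0+1)/\<theta>^j0"])
      using main_bound[OF assms eta(3) _ thp th0] eta by auto
    done
qed

end
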